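(* Let $X$ be a Banach space, let $A$ be a closed, densely defined operator on $X$, and let $B$ be a bounded, one-to-one operator on $X$ whose range does not contain all of $\textnormal{D}(A)$. If $AB$ (on its natural domain $\{x\in X: Bx\in\textnormal{D}(A)\}$) is Fredholm, $\textnormal{D}(AB)$ (with the graph norm of $AB$) is compactly embedded in $X$, and the resolvent set $\rho(A)$ is nonempty, then $\operatorname{ind}(AB) < 0$.
   Context: An operator is Fredholm if it is densely defined, closed, has finite-dimensional nullspace, closed range, and range of finite codimension; its index is $\operatorname{ind}(L) = \dim\textnormal{N}(L) - \operatorname{codim}\textnormal{R}(L)$. $\rho(A)$ is the set of $\lambda\in\mathbb{C}$ such that $A-\lambda$ has a bounded inverse. Compactly embedded means the inclusion map into $X$ is compact. *)

theory Defs
  imports "HOL-Analysis.Analysis"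
begin

text \<open>HOL-Analysis has no class of complex normed spaces.  A complex Banach space
is modelled as a real Banach space (type class banach) together with a complex
structure J (multiplication by i): a bounded real-linear map with J (J x) = - x
and such that multiplication by unimodular scalars e^(i t) is isometric.\<close>

definition cstruct :: "('a::banach \<Rightarrow> 'a) \<Rightarrow> bool" where
  "cstruct J \<longleftrightarrow> bounded_linear J \<and> (\<forall>x. J (J x) = - x) \<and>
     (\<forall>x t. norm (cos t *\<^sub>R x + sin t *\<^sub>R J x) = norm x)"

definition cscale :: "('a::banach \<Rightarrow> 'a) \<Rightarrow> complex \<Rightarrow> 'a \<Rightarrow> 'a" where
  "cscale J z x = Re z *\<^sub>R x + Im z *\<^sub>R J x"

definition csubspace :: "('a::banach \<Rightarrow> 'a) \<Rightarrow> 'a set \<Rightarrow> bool" where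
  "csubspace J S \<longleftrightarrow> subspace S \<and> (\<forall>x\<in>S. J x \<in> S)"

definition cspan :: "('a::banach \<Rightarrow> 'a) \<Rightarrow> 'a set \<Rightarrow> 'a set" where
  "cspan J S = span (S \<union> J ` S)"

definition clinear_on :: "('a::banach \<Rightarrow> 'a) \<Rightarrow> 'a set \<Rightarrow> ('a \<Rightarrow> 'a) \<Rightarrow> bool" where
  "clinear_on J D T \<longleftrightarrow> csubspace J D \<and>
     (\<forall>x\<in>D. \<forall>y\<in>D. T (x + y) = T x + T y) \<and>
     (\<forall>c. \<forall>x\<in>D. T (c *\<^sub>R x) = c *\<^sub>R T x) \<and>
     (\<forall>x\<in>D. T (J x) = J (T x))"

definition densely_defined :: "'a::banach set \<Rightarrow> bool" where
  "densely_defined D \<longleftrightarrow> closure D = UNIV"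

definition closed_op :: "'a::banach set \<Rightarrow> ('a \<Rightarrow> 'a) \<Rightarrow> bool" where
  "closed_op D T \<longleftrightarrow> closed {(x, T x) | x. x \<in> D}"

definition null_space :: "'a::banach set \<Rightarrow> ('a \<Rightarrow> 'a) \<Rightarrow> 'a set" where
  "null_space D T = {x \<in> D. T x = 0}"

definition range_op :: "'a::banach set \<Rightarrow> ('a \<Rightarrow> 'a) \<Rightarrow> 'a set" where
  "range_op D T = T ` D"

definition cfinite_dim :: "('a::banach \<Rightarrow> 'a) \<Rightarrow> 'a set \<Rightarrow> bool" where
  "cfinite_dim J S \<longleftrightarrow> (\<exists>B. finite B \<and> cspan J B = S)"

definition cdim :: "('a::banach \<Rightarrow> 'a) \<Rightarrow> 'a set \<Rightarrow> nat" where
  "cdim J S = (LEAST n. \<exists>B. finite B \<and> card B = n \<and> cspan J B = S)"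

text \<open>codimension of a subspace R of X = complex dimension of X/R, i.e. the least
number of vectors which together with R span X\<close>
definition finite_codim :: "('a::banach \<Rightarrow> 'a) \<Rightarrow> 'a set \<Rightarrow> bool" where
  "finite_codim J R \<longleftrightarrow> (\<exists>B. finite B \<and> cspan J (R \<union> B) = UNIV)"

definition codim :: "('a::banach \<Rightarrow> 'a) \<Rightarrow> 'a set \<Rightarrow> nat" where
  "codim J R = (LEAST n. \<exists>B. finite B \<and> card B = n \<and> cspan J (R \<union> B) = UNIV)"

definition fredholm :: "('a::banach \<Rightarrow> 'a) \<Rightarrow> 'a set \<Rightarrow> ('a \<Rightarrow> 'a) \<Rightarrow> bool" where
  "fredholm J D T \<longleftrightarrow> densely_defined D \<and> closed_op D T \<and>
     cfinite_dim J (null_space D T) \<and> closed (range_op D T) \<and>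
     finite_codim J (range_op D T)"

definition op_index :: "('a::banach \<Rightarrow> 'a) \<Rightarrow> 'a set \<Rightarrow> ('a \<Rightarrow> 'a) \<Rightarrow> int" where
  "op_index J D T = int (cdim J (null_space D T)) - int (codim J (range_op D T))"

definition resolvent_set :: "('a::banach \<Rightarrow> 'a) \<Rightarrow> 'a set \<Rightarrow> ('a \<Rightarrow> 'a) \<Rightarrow> complex set" where
  "resolvent_set J D T = {z. \<exists>R. bounded_linear R \<and>
      (\<forall>y. R y \<in> D \<and> T (R y) - cscale J z (R y) = y) \<and>
      (\<forall>x\<in>D. R (T x - cscale J z x) = x)}"

text \<open>D with the graph norm norm x + norm (T x) is compactly embedded in X:
graph-norm-bounded subsets of D are relatively compact in X\<close>
definition compactly_embedded :: "'a::banach set \<Rightarrow> ('a \<Rightarrow> 'a) \<Rightarrow> bool" where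
  "compactly_embedded D T \<longleftrightarrow>
     (\<forall>M. compact (closure {x \<in> D. norm x + norm (T x) \<le> M}))"

end

theory Submission
  imports Defs
begin
definition hb_ok :: "'a::real_normed_vector set \<Rightarrow> ('a \<Rightarrow> real) \<Rightarrow> real \<Rightarrow> ('a \<times> real) set \<Rightarrow> bool" where
  "hb_ok V g C H \<longleftrightarrow> (\<forall>x a b. (x,a)\<in>H \<longrightarrow> (x,b)\<in>H \<longrightarrow> a = b) \<and> (\<forall>x\<in>V. (x, g x) \<in> H) \<and>
     (\<forall>x a y b. (x,a)\<in>H \<longrightarrow> (y,b)\<in>H \<longrightarrow> (x+y, a+b) \<in> H) \<and>
     (\<forall>x a c. (x,a)\<in>H \<longrightarrow> (c *\<^sub>R x, c*a) \<in> H) \<and> (\<forall>x a. (x,a)\<in>H \<longrightarrow> a \<le> C * norm x)"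

lemma hb_ext_step:
  fixes M :: "('a::real_normed_vector \<times> real) set"
  assumes ok: "hb_ok V g C M" and C: "C \<ge> 0" and V0: "0 \<in> V" and x0: "\<forall>a. (x0, a) \<notin> M"
  shows "\<exists>H. hb_ok V g C H \<and> M \<subseteq> H \<and> (\<exists>a. (x0, a) \<in> H)"
proof -
  have fnc: "\<And>x a b. (x,a)\<in>M \<Longrightarrow> (x,b)\<in>M \<Longrightarrow> a = b"
   and Vin: "\<And>x. x\<in>V \<Longrightarrow> (x, g x) \<in> M"
   and add: "\<And>x a y b. (x,a)\<in>M \<Longrightarrow> (y,b)\<in>M \<Longrightarrow> (x+y, a+b) \<in> M"
   and sc: "\<And>x a c. (x,a)\<in>M \<Longrightarrow> (c *\<^sub>R x, c*a) \<in> M"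
   and bd: "\<And>x a. (x,a)\<in>M \<Longrightarrow> a \<le> C * norm x"
    using ok unfolding hb_ok_def by blast+
  have z: "(0, 0) \<in> M"
  proof -
    have "(0 *\<^sub>R 0, 0 * g 0) \<in> M" using sc Vin V0 by blast
    then show ?thesis by simp
  qed
  define S where "S = {a - C * norm (w - x0) | w a. (w,a) \<in> M}"
  have key: "s \<le> C * norm (w' + x0) - a'" if sS: "s \<in> S" and m2: "(w',a') \<in> M" for s w' a'
  proof -
    obtain w a where wa: "(w,a) \<in> M" "s = a - C * norm (w - x0)" using sS unfolding S_def by blast
    have "a + a' \<le> C * norm (w + w')" using bd add wa(1) m2 by blast
    also have "\<dots> \<le> C * (norm (w - x0) + norm (w' + x0))"
    proof -
      have "norm (w + w') \<le> norm (w - x0) + norm (w' + x0)"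
        using norm_triangle_ineq[of "w - x0" "w' + x0"] by simp
      then show ?thesis using C by (rule mult_left_mono)
    qed
    finally show ?thesis using wa(2) by (simp add: algebra_simps)
  qed
  have Sne: "S \<noteq> {}" using z unfolding S_def by blast
  have Sbdd: "bdd_above S" by (rule bdd_aboveI[where M="C * norm (0 + x0) - 0"]) (rule key[OF _ z])
  define c where "c = Sup S"
  have c1: "\<And>w a. (w,a) \<in> M \<Longrightarrow> a - C * norm (w - x0) \<le> c"
    unfolding c_def using Sbdd by (intro cSup_upper) (auto simp: S_def)
  have c2: "\<And>w a. (w,a) \<in> M \<Longrightarrow> c \<le> C * norm (w + x0) - a"
    unfolding c_def using Sne key by (intro cSup_least) auto
  define H where "H = {(w + t *\<^sub>R x0, a + t * c) | w a t. (w,a) \<in> M}"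
  have dom: "x \<in> fst ` M" if "(x, a) \<in> M" for x a using that by force
  have mem_diff: "(w' - w, a' - a) \<in> M" if "(w,a) \<in> M" "(w',a') \<in> M" for w a w' a'
    using add[OF that(2) sc[OF that(1), of "-1"]] by simp
  have "hb_ok V g C H"
    unfolding hb_ok_def
  proof (intro conjI allI impI ballI)
    fix x a b assume "(x, a) \<in> H" "(x, b) \<in> H"
    then obtain w1 a1 t1 w2 a2 t2 where
      m: "(w1,a1)\<in>M" "(w2,a2)\<in>M" and e: "x = w1 + t1 *\<^sub>R x0" "a = a1 + t1 * c"
        "x = w2 + t2 *\<^sub>R x0" "b = a2 + t2 * c"
      unfolding H_def by blast
    have "t1 = t2"
    proof (rule ccontr)
      assume ne: "t1 \<noteq> t2"
      have "(1 / (t1 - t2)) *\<^sub>R (w2 - w1) = x0"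
      proof -
        have "w2 - w1 = (t1 - t2) *\<^sub>R x0" using e by (simp add: algebra_simps)
        then show ?thesis using ne by simp
      qed
      moreover have "((1 / (t1 - t2)) *\<^sub>R (w2 - w1), (1 / (t1 - t2)) * (a2 - a1)) \<in> M"
        using sc mem_diff m by blast
      ultimately show False using x0 by metis
    qed
    then have "w1 = w2" using e by simp
    then have "a1 = a2" using fnc m by blast
    then show "a = b" using e \<open>t1 = t2\<close> by simp
  next
    fix x assume "x \<in> V"
    then show "(x, g x) \<in> H" unfolding H_def using Vin by force
  next
    fix x a y b assume "(x, a) \<in> H" "(y, b) \<in> H"
    then obtain w1 a1 t1 w2 a2 t2 where
      m: "(w1,a1)\<in>M" "(w2,a2)\<in>M" and e: "x = w1 + t1 *\<^sub>R x0" "a = a1 + t1 * c"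
        "y = w2 + t2 *\<^sub>R x0" "b = a2 + t2 * c"
      unfolding H_def by blast
    have "(w1 + w2, a1 + a2) \<in> M" using add m by blast
    moreover have "x + y = (w1 + w2) + (t1 + t2) *\<^sub>R x0" "a + b = (a1 + a2) + (t1 + t2) * c"
      using e by (simp_all add: algebra_simps)
    ultimately show "(x + y, a + b) \<in> H" unfolding H_def by blast
  next
    fix x a s assume "(x, a) \<in> H"
    then obtain w1 a1 t1 where m: "(w1,a1)\<in>M" and e: "x = w1 + t1 *\<^sub>R x0" "a = a1 + t1 * c"
      unfolding H_def by blast
    have "(s *\<^sub>R w1, s * a1) \<in> M" using sc m by blast
    moreover have "s *\<^sub>R x = s *\<^sub>R w1 + (s * t1) *\<^sub>R x0" "s * a = s * a1 + (s * t1) * c"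
      using e by (simp_all add: algebra_simps)
    ultimately show "(s *\<^sub>R x, s * a) \<in> H" unfolding H_def by blast
  next
    fix x a assume "(x, a) \<in> H"
    then obtain w a1 t where m: "(w,a1)\<in>M" and e: "x = w + t *\<^sub>R x0" "a = a1 + t * c"
      unfolding H_def by blast
    show "a \<le> C * norm x"
    proof (cases t "0::real" rule: linorder_cases)
      case equal then show ?thesis using e bd m by simp
    next
      case greater
      define N where "N = norm ((1/t) *\<^sub>R w + x0)"
      have n: "norm (w + t *\<^sub>R x0) = t * N"
      proof -
        have "w + t *\<^sub>R x0 = t *\<^sub>R ((1/t) *\<^sub>R w + x0)" using greater by (simp add: algebra_simps)
        then show ?thesis using greater by (simp add: N_def)
      qed
      have "c \<le> C * N - (1/t) * a1" unfolding N_def using c2 sc m by blast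
      then have "t * c \<le> t * (C * N - (1/t) * a1)"
        using greater by (simp add: mult_left_mono)
      also have "t * (C * N - (1/t) * a1) = C * (t * N) - a1"
        using greater by (simp add: field_simps)
      finally show ?thesis using e n by simp
    next
      case less
      define s where "s = - t"
      have s: "s > 0" using less by (simp add: s_def)
      define N where "N = norm ((1/s) *\<^sub>R w - x0)"
      have n: "norm (w + t *\<^sub>R x0) = s * N"
      proof -
        have "w + t *\<^sub>R x0 = s *\<^sub>R ((1/s) *\<^sub>R w - x0)" using s by (simp add: algebra_simps s_def)
        then show ?thesis using s by (simp add: N_def)
      qed
      have "(1/s) * a1 - C * N \<le> c" unfolding N_def using c1 sc m by blast
      then have "s * ((1/s) * a1 - C * N) \<le> s * c"
        using s by (simp add: mult_left_mono)
      also have "s * ((1/s) * a1 - C * N) = a1 - C * (s * N)"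
        using s by (simp add: field_simps)
      finally show ?thesis using e n by (simp add: s_def)
    qed
  qed
  moreover have "M \<subseteq> H"
  proof (rule subsetI)
    fix p assume p: "p \<in> M"
    obtain x a where pa: "p = (x,a)" by (cases p)
    have "p = (x + 0 *\<^sub>R x0, a + 0 * c) \<and> (x,a) \<in> M" using p pa by simp
    then show "p \<in> H" unfolding H_def by blast
  qed
  moreover have "(x0, c) \<in> H"
  proof -
    have "(x0, c) = (0 + 1 *\<^sub>R x0, 0 + 1 * c) \<and> (0,0) \<in> M" using z by simp
    then show ?thesis unfolding H_def by blast
  qed
  ultimately show ?thesis by blast
qed

lemma hb_okD:
  assumes "hb_ok V g C H"
  shows hb_ok_fun: "\<And>x a b. (x,a)\<in>H \<Longrightarrow> (x,b)\<in>H \<Longrightarrow> a = b"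
   and hb_ok_V: "\<And>x. x\<in>V \<Longrightarrow> (x, g x) \<in> H"
   and hb_ok_add: "\<And>x a y b. (x,a)\<in>H \<Longrightarrow> (y,b)\<in>H \<Longrightarrow> (x+y, a+b) \<in> H"
   and hb_ok_sc: "\<And>x a c. (x,a)\<in>H \<Longrightarrow> (c *\<^sub>R x, c*a) \<in> H"
   and hb_ok_bd: "\<And>x a. (x,a)\<in>H \<Longrightarrow> a \<le> C * norm x"
  using assms unfolding hb_ok_def by blast+

lemma hb_okI:
  assumes "\<And>x a b. (x,a)\<in>H \<Longrightarrow> (x,b)\<in>H \<Longrightarrow> a = b"
   and "\<And>x. x\<in>V \<Longrightarrow> (x, g x) \<in> H"
   and "\<And>x a y b. (x,a)\<in>H \<Longrightarrow> (y,b)\<in>H \<Longrightarrow> (x+y, a+b) \<in> H"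
   and "\<And>x a c. (x,a)\<in>H \<Longrightarrow> (c *\<^sub>R x, c*a) \<in> H"
   and "\<And>x a. (x,a)\<in>H \<Longrightarrow> a \<le> C * norm x"
  shows "hb_ok V g C H"
  using assms unfolding hb_ok_def by blast

theorem hahn_banach:
  fixes g :: "'a::real_normed_vector \<Rightarrow> real"
  assumes V: "subspace V" and gadd: "\<forall>x\<in>V. \<forall>y\<in>V. g (x+y) = g x + g y"
    and gsc: "\<forall>c. \<forall>x\<in>V. g (c *\<^sub>R x) = c * g x" and gbd: "\<forall>x\<in>V. g x \<le> C * norm x"
    and C: "C \<ge> 0"
  shows "\<exists>f. bounded_linear f \<and> (\<forall>x\<in>V. f x = g x) \<and> (\<forall>x. \<bar>f x\<bar> \<le> C * norm x)"
proof -
  define H0 where "H0 = {(x, g x) | x. x \<in> V}"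
  have V0: "0 \<in> V" using V by (rule subspace_0)
  have H0ok: "hb_ok V g C H0"
  proof (rule hb_okI)
    show "a = b" if "(x,a)\<in>H0" "(x,b)\<in>H0" for x a b using that by (simp add: H0_def)
    show "(x, g x) \<in> H0" if "x \<in> V" for x using that by (simp add: H0_def)
    show "(x+y, a+b) \<in> H0" if "(x,a)\<in>H0" "(y,b)\<in>H0" for x a y b
      using that gadd V by (simp add: H0_def subspace_add)
    show "(c *\<^sub>R x, c*a) \<in> H0" if "(x,a)\<in>H0" for x a c
      using that gsc V by (simp add: H0_def subspace_scale)
    show "a \<le> C * norm x" if "(x,a)\<in>H0" for x a
      using that gbd by (simp add: H0_def)
  qed
  define A where "A = {H. hb_ok V g C H}"
  have "\<exists>M\<in>A. \<forall>X\<in>A. M \<subseteq> X \<longrightarrow> X = M"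
  proof (rule Zorn_Lemma2, intro ballI)
    fix Ch assume Ch: "Ch \<in> chains A"
    define U where "U = \<Union>(insert H0 Ch)"
    have okall: "hb_ok V g C X" if "X \<in> insert H0 Ch" for X
      using that Ch H0ok unfolding chains_def A_def by auto
    have sub: "H0 \<subseteq> X" if "X \<in> Ch" for X
    proof
      fix p assume "p \<in> H0"
      then obtain x where "x \<in> V" "p = (x, g x)" by (auto simp: H0_def)
      then show "p \<in> X" using hb_ok_V[OF okall] that by blast
    qed
    have ch: "\<And>X Y. X \<in> Ch \<Longrightarrow> Y \<in> Ch \<Longrightarrow> X \<subseteq> Y \<or> Y \<subseteq> X"
      using Ch unfolding chains_def chain_subset_def by simp
    have cmp: "X \<subseteq> Y \<or> Y \<subseteq> X" if X: "X \<in> insert H0 Ch" and Y: "Y \<in> insert H0 Ch" for X Y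
    proof (cases "X = H0")
      case True
      have "H0 \<subseteq> Y"
      proof (cases "Y = H0")
        case False then have "Y \<in> Ch" using Y by simp
        then show ?thesis by (rule sub)
      qed simp
      then show ?thesis using True by simp
    next
      case False
      then have XC: "X \<in> Ch" using X by simp
      show ?thesis
      proof (cases "Y = H0")
        case True then show ?thesis using sub[OF XC] by simp
      next
        case False
        then have "Y \<in> Ch" using Y by simp
        then show ?thesis using ch[OF XC] by simp
      qed
    qed
    have two: "\<exists>X\<in>insert H0 Ch. p \<in> X \<and> q \<in> X" if "p \<in> U" "q \<in> U" for p q
    proof -
      have pU: "p \<in> \<Union>(insert H0 Ch)" and qU: "q \<in> \<Union>(insert H0 Ch)" using that by (simp_all add: U_def)
      obtain X where X: "X \<in> insert H0 Ch" "p \<in> X" using UnionE[OF pU] by metis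
      obtain Y where Y: "Y \<in> insert H0 Ch" "q \<in> Y" using UnionE[OF qU] by metis
      note XY = X(1) Y(1) X(2) Y(2)
      show ?thesis
      proof (cases "X \<subseteq> Y")
        case True then show ?thesis using XY by blast
      next
        case False then have "Y \<subseteq> X" using cmp[OF XY(1,2)] by simp
        then show ?thesis using XY by blast
      qed
    qed
    have "hb_ok V g C U"
    proof (rule hb_okI)
      fix x a b assume "(x,a) \<in> U" "(x,b) \<in> U"
      then obtain X where "X \<in> insert H0 Ch" "(x,a) \<in> X" "(x,b) \<in> X" using two by blast
      then show "a = b" using hb_ok_fun[OF okall] by blast
    next
      fix x assume "x \<in> V" then show "(x, g x) \<in> U" unfolding U_def H0_def by blast
    next
      fix x a y b assume "(x,a) \<in> U" "(y,b) \<in> U"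
      then obtain X where X: "X \<in> insert H0 Ch" "(x,a) \<in> X" "(y,b) \<in> X" using two by blast
      then have "(x+y, a+b) \<in> X" using hb_ok_add[OF okall] by blast
      then show "(x+y, a+b) \<in> U" using X unfolding U_def by blast
    next
      fix x a c assume "(x,a) \<in> U"
      then obtain X where X: "X \<in> insert H0 Ch" "(x,a) \<in> X" unfolding U_def by blast
      then have "(c *\<^sub>R x, c*a) \<in> X" using hb_ok_sc[OF okall] by blast
      then show "(c *\<^sub>R x, c*a) \<in> U" using X unfolding U_def by blast
    next
      fix x a assume "(x,a) \<in> U"
      then obtain X where X: "X \<in> insert H0 Ch" "(x,a) \<in> X" unfolding U_def by blast
      then show "a \<le> C * norm x" using hb_ok_bd[OF okall] by blast
    qed
    moreover have "\<forall>X\<in>Ch. X \<subseteq> U" unfolding U_def by blast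
    ultimately show "\<exists>U\<in>A. \<forall>X\<in>Ch. X \<subseteq> U" unfolding A_def by blast
  qed
  then obtain M where M: "hb_ok V g C M" and max: "\<And>X. hb_ok V g C X \<Longrightarrow> M \<subseteq> X \<Longrightarrow> X = M"
    unfolding A_def by blast
  have tot: "\<exists>a. (x, a) \<in> M" for x
  proof (rule ccontr)
    assume na: "\<not> ?thesis"
    then obtain H where "hb_ok V g C H" "M \<subseteq> H" "\<exists>a. (x, a) \<in> H"
      using hb_ext_step[OF M C V0] by blast
    then show False using max na by blast
  qed
  note fnc = hb_ok_fun[OF M] and Vin = hb_ok_V[OF M] and add = hb_ok_add[OF M]
    and sc = hb_ok_sc[OF M] and bd = hb_ok_bd[OF M]
  define f where "f x = (THE a. (x, a) \<in> M)" for x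
  have fM: "(x, f x) \<in> M" for x
  proof -
    obtain a where a: "(x, a) \<in> M" using tot by blast
    have "(THE a. (x, a) \<in> M) = a" by (rule the_equality) (use a fnc in blast)+
    then show ?thesis using a by (simp add: f_def)
  qed
  have feq: "f x = a" if "(x, a) \<in> M" for x a using fnc fM that by blast
  have fadd: "f (x + y) = f x + f y" for x y using feq add fM by blast
  have fsc: "f (r *\<^sub>R x) = r * f x" for r x using feq sc fM by blast
  have fb: "\<bar>f x\<bar> \<le> C * norm x" for x
  proof -
    have "f x \<le> C * norm x" using bd fM by blast
    moreover have "f (-x) \<le> C * norm (-x)" using bd fM by blast
    moreover have "f (-x) = - f x" using fsc[of "-1" x] by simp
    ultimately show ?thesis by simp
  qed
  have "bounded_linear f"
    by (rule bounded_linear_intro[where K=C]) (auto simp: fadd fsc fb mult.commute)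
  then show ?thesis using fb feq Vin by blast
qed

lemma coeff_bound:
  fixes e :: "'a::real_normed_vector"
  assumes M: "subspace M" and m: "m \<in> M"
  shows "\<bar>k\<bar> * infdist e M \<le> norm (k *\<^sub>R e + m)"
proof (cases "k = 0")
  case True then show ?thesis by simp
next
  case False
  have mem: "- ((1/k) *\<^sub>R m) \<in> M" using M m by (simp add: subspace_neg subspace_scale)
  have "infdist e M \<le> dist e (- ((1/k) *\<^sub>R m))" by (rule infdist_le[OF mem])
  also have "\<dots> = norm (e + (1/k) *\<^sub>R m)" by (simp add: dist_norm)
  finally have "\<bar>k\<bar> * infdist e M \<le> \<bar>k\<bar> * norm (e + (1/k) *\<^sub>R m)"
    by (simp add: mult_left_mono)
  also have "\<bar>k\<bar> * norm (e + (1/k) *\<^sub>R m) = norm (k *\<^sub>R (e + (1/k) *\<^sub>R m))" by simp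
  also have "k *\<^sub>R (e + (1/k) *\<^sub>R m) = k *\<^sub>R e + m" using False by (simp add: algebra_simps)
  finally show ?thesis .
qed

lemma closed_span_insert:
  fixes e :: "'a::banach"
  assumes cl: "closed (span E)"
  shows "closed (span (insert e E))"
proof (cases "e \<in> span E")
  case True
  then have "span (insert e E) = span E" by (rule span_redundant)
  then show ?thesis using cl by simp
next
  case False
  define M where "M = span E"
  have M: "subspace M" unfolding M_def by simp
  have ne: "M \<noteq> {}" using M subspace_0 by blast
  define d where "d = infdist e M"
  have clM: "closed M" using cl by (simp add: M_def)
  have eM: "e \<notin> M" using False by (simp add: M_def)
  have d: "d > 0" unfolding d_def using clM ne eM by (rule infdist_pos_not_in_closed)
  show ?thesis
    unfolding closed_sequential_limits
  proof (intro allI impI, elim conjE)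
    fix x l assume x: "\<forall>n. x n \<in> span (insert e E)" and lim: "x \<longlonglongrightarrow> l"
    have "\<forall>n. \<exists>c. x n - c *\<^sub>R e \<in> M" using x by (simp add: span_insert M_def)
    from choice[OF this] obtain k where k0: "\<forall>n. x n - k n *\<^sub>R e \<in> M" by blast
    have k: "\<And>n. x n - k n *\<^sub>R e \<in> M" using k0 by blast
    have kb: "\<bar>k n - k m\<bar> * d \<le> norm (x n - x m)" for n m
    proof -
      have "(x n - k n *\<^sub>R e) - (x m - k m *\<^sub>R e) \<in> M" using k M by (simp add: subspace_diff)
      from coeff_bound[OF M this, of "k n - k m" e]
      show ?thesis unfolding d_def by (simp add: algebra_simps)
    qed
    have "Cauchy k"
    proof (rule metric_CauchyI)
      fix r :: real assume r: "r > 0"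
      have rd: "r * d > 0" using r d by simp
      obtain N where N0: "\<forall>m\<ge>N. \<forall>n\<ge>N. dist (x m) (x n) < r * d"
        using metric_CauchyD[OF LIMSEQ_imp_Cauchy[OF lim] rd] by blast
      have N: "\<And>m n. m \<ge> N \<Longrightarrow> n \<ge> N \<Longrightarrow> dist (x m) (x n) < r * d" using N0 by blast
      show "\<exists>N. \<forall>m\<ge>N. \<forall>n\<ge>N. dist (k m) (k n) < r"
      proof (intro exI allI impI)
        fix m n assume "m \<ge> N" "n \<ge> N"
        then have "\<bar>k m - k n\<bar> * d < r * d" using kb[of m n] N[of m n] by (simp add: dist_norm)
        then show "dist (k m) (k n) < r" using d by (simp add: dist_real_def)
      qed
    qed
    then obtain k0 where k0: "k \<longlonglongrightarrow> k0" using Cauchy_convergent_iff convergent_def by blast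
    have tl: "(\<lambda>n. x n - k n *\<^sub>R e) \<longlonglongrightarrow> l - k0 *\<^sub>R e"
      using lim k0 by (intro tendsto_intros)
    have "l - k0 *\<^sub>R e \<in> M" by (rule closed_sequentially[OF clM k tl])
    then have "\<exists>k. l - k *\<^sub>R e \<in> span E" unfolding M_def by blast
    then show "l \<in> span (insert e E)" by (simp add: span_insert)
  qed
qed

lemma closed_span_finite:
  fixes E :: "'a::banach set"
  assumes "finite E"
  shows "closed (span E)"
  using assms
proof (induction E rule: finite_induct)
  case empty then show ?case by simp
next
  case (insert e E)
  from closed_span_insert[OF insert(3)] show ?case .
qed

lemma separating_functional:
  fixes b :: "'a::banach"
  assumes M: "subspace M" and cl: "closed M" and b: "b \<notin> M"
  shows "\<exists>f::'a\<Rightarrow>real. bounded_linear f \<and> f b = 1 \<and> (\<forall>m\<in>M. f m = 0)"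
proof -
  have ne: "M \<noteq> {}" using M subspace_0 by blast
  define d where "d = infdist b M"
  have d: "d > 0" unfolding d_def using cl ne b by (rule infdist_pos_not_in_closed)
  define V where "V = {x. \<exists>k. x - k *\<^sub>R b \<in> M}"
  have uniq: "k = k'" if "x - k *\<^sub>R b \<in> M" "x - k' *\<^sub>R b \<in> M" for x k k'
  proof (rule ccontr)
    assume ne: "k \<noteq> k'"
    have "(x - k *\<^sub>R b) - (x - k' *\<^sub>R b) \<in> M" by (rule subspace_diff[OF M that])
    then have "(k' - k) *\<^sub>R b \<in> M" by (simp add: algebra_simps)
    then have "(1 / (k' - k)) *\<^sub>R ((k' - k) *\<^sub>R b) \<in> M" by (rule subspace_scale[OF M])
    then show False using ne b by simp
  qed
  define g where "g x = (THE k. x - k *\<^sub>R b \<in> M)" for x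
  have gI: "g x = k" if "x - k *\<^sub>R b \<in> M" for x k
    unfolding g_def
  proof (rule the_equality)
    show "x - k *\<^sub>R b \<in> M" by (rule that)
    show "k' = k" if "x - k' *\<^sub>R b \<in> M" for k' using uniq[OF that \<open>x - k *\<^sub>R b \<in> M\<close>] .
  qed
  have gV: "x - g x *\<^sub>R b \<in> M" if xV: "x \<in> V" for x
  proof -
    have "\<exists>k. x - k *\<^sub>R b \<in> M" using xV unfolding V_def by blast
    then obtain k where k: "x - k *\<^sub>R b \<in> M" by blast
    then show ?thesis using gI[OF k] by simp
  qed
  have V0: "0 \<in> V"
  proof -
    have "0 - 0 *\<^sub>R b \<in> M" using subspace_0[OF M] by simp
    then show ?thesis unfolding V_def by blast
  qed
  have Vadd: "x + y \<in> V" if xy: "x \<in> V" "y \<in> V" for x y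
  proof -
    obtain k k' where "x - k *\<^sub>R b \<in> M" "y - k' *\<^sub>R b \<in> M" using xy unfolding V_def by blast
    then have "(x - k *\<^sub>R b) + (y - k' *\<^sub>R b) \<in> M" by (rule subspace_add[OF M])
    then have "x + y - (k + k') *\<^sub>R b \<in> M" by (simp add: algebra_simps)
    then show ?thesis unfolding V_def by blast
  qed
  have Vsc: "c *\<^sub>R x \<in> V" if xV: "x \<in> V" for x c
  proof -
    obtain k where "x - k *\<^sub>R b \<in> M" using xV unfolding V_def by blast
    then have "c *\<^sub>R (x - k *\<^sub>R b) \<in> M" by (rule subspace_scale[OF M])
    then have "c *\<^sub>R x - (c * k) *\<^sub>R b \<in> M" by (simp add: algebra_simps)
    then show ?thesis unfolding V_def by blast
  qed
  have Vsub: "subspace V" unfolding subspace_def using V0 Vadd Vsc by blast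
  have gadd: "\<forall>x\<in>V. \<forall>y\<in>V. g (x + y) = g x + g y"
  proof (intro ballI)
    fix x y assume "x \<in> V" "y \<in> V"
    then have "(x - g x *\<^sub>R b) + (y - g y *\<^sub>R b) \<in> M" using gV M by (simp add: subspace_add)
    then have "x + y - (g x + g y) *\<^sub>R b \<in> M" by (simp add: algebra_simps)
    then show "g (x + y) = g x + g y" by (rule gI)
  qed
  have gsc: "\<forall>c. \<forall>x\<in>V. g (c *\<^sub>R x) = c * g x"
  proof (intro allI ballI)
    fix c x assume "x \<in> V"
    then have "c *\<^sub>R (x - g x *\<^sub>R b) \<in> M" using gV M by (simp add: subspace_scale)
    then have "c *\<^sub>R x - (c * g x) *\<^sub>R b \<in> M" by (simp add: algebra_simps)
    then show "g (c *\<^sub>R x) = c * g x" by (rule gI)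
  qed
  have gbd: "\<forall>x\<in>V. g x \<le> (1/d) * norm x"
  proof (intro ballI)
    fix x assume xV: "x \<in> V"
    have "x - g x *\<^sub>R b \<in> M" by (rule gV[OF xV])
    from coeff_bound[OF M this, of "g x" b]
    have "\<bar>g x\<bar> * d \<le> norm (g x *\<^sub>R b + (x - g x *\<^sub>R b))"
      unfolding d_def by simp
    then have "\<bar>g x\<bar> * d \<le> norm x" by simp
    then have "\<bar>g x\<bar> \<le> norm x / d" using d by (simp add: field_simps)
    then show "g x \<le> (1/d) * norm x" by simp
  qed
  obtain f where f: "bounded_linear f" "\<forall>x\<in>V. f x = g x"
    using hahn_banach[OF Vsub gadd gsc gbd] d by auto
  have b1: "b - 1 *\<^sub>R b \<in> M" using subspace_0[OF M] by simp
  have "b \<in> V" unfolding V_def using b1 by blast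
  then have "f b = 1" using f(2) gI[OF b1] by simp
  moreover have "f m = 0" if "m \<in> M" for m
  proof -
    have m0: "m - 0 *\<^sub>R b \<in> M" using that by simp
    have "m \<in> V" unfolding V_def using m0 by blast
    then show ?thesis using f(2) gI[OF m0] by simp
  qed
  ultimately have "bounded_linear f \<and> f b = 1 \<and> (\<forall>m\<in>M. f m = 0)" using f(1) by blast
  then show ?thesis by (intro exI[where x=f])
qed

lemma infdist_attained_lt:
  fixes A :: "'a::metric_space set"
  assumes "A \<noteq> {}" "infdist x A < e"
  shows "\<exists>a\<in>A. dist x a < e"
proof -
  have "(INF a\<in>A. dist x a) < e" using assms by (simp add: infdist_def)
  then show ?thesis
    using assms(1) by (subst (asm) cINF_less_iff) (auto intro: bdd_belowI[where m=0])
qed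

lemma riesz_lemma:
  fixes W W' :: "'a::real_normed_vector set"
  assumes "subspace W" "subspace W'" "closed W'" "W' \<subseteq> W" "W' \<noteq> W"
  shows "\<exists>x\<in>W. norm x = 1 \<and> (\<forall>w\<in>W'. 1/2 \<le> norm (x - w))"
proof -
  obtain z where z: "z \<in> W" "z \<notin> W'" using assms by blast
  have ne: "W' \<noteq> {}" using assms(2) subspace_0 by blast
  define d where "d = infdist z W'"
  have d: "0 < d" unfolding d_def by (rule infdist_pos_not_in_closed) (use assms z ne in auto)
  obtain w0 where w0: "w0 \<in> W'" "dist z w0 < 2*d"
    using infdist_attained_lt[OF ne, of z "2*d"] d unfolding d_def by auto
  define r where "r = norm (z - w0)"
  have rpos: "0 < r" unfolding r_def using z w0 by auto
  define x where "x = (1/r) *\<^sub>R (z - w0)"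
  have "x \<in> W" unfolding x_def using z w0 assms(4) assms(1)
    by (meson in_mono subspace_diff subspace_scale)
  moreover have "norm x = 1" unfolding x_def r_def using rpos r_def by simp
  moreover have "1/2 \<le> norm (x - w)" if w: "w \<in> W'" for w
  proof -
    have mem: "w0 + r *\<^sub>R w \<in> W'" using w w0 assms(2) by (simp add: subspace_add subspace_scale)
    have "d \<le> dist z (w0 + r *\<^sub>R w)" unfolding d_def using mem by (rule infdist_le)
    also have "\<dots> = norm (r *\<^sub>R (x - w))"
      unfolding x_def dist_norm using rpos by (simp add: algebra_simps)
    also have "\<dots> = r * norm (x - w)" using rpos by simp
    finally have "d \<le> r * norm (x - w)" .
    moreover have "r < 2 * d" using w0 unfolding r_def dist_norm by simp
    ultimately show ?thesis
    proof -
      assume a: "d \<le> r * norm (x - w)" "r < 2 * d"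
      show ?thesis
      proof (rule ccontr)
        assume "\<not> ?thesis"
        then have "r * norm (x - w) \<le> r * (1/2)" using rpos by (intro mult_left_mono) auto
        then show False using a by linarith
      qed
    qed
  qed
  ultimately show ?thesis by blast
qed

lemma fa_lower_bound:
  fixes G :: "'a::banach \<Rightarrow> 'a"
  assumes bl: "bounded_linear G"
   and cpt: "\<And>x::nat\<Rightarrow>'a. (\<forall>n. norm (x n) \<le> 1) \<Longrightarrow> (\<exists>l r. strict_mono r \<and> ((G \<circ> x \<circ> r) \<longlonglongrightarrow> l))"
   and inj: "inj (\<lambda>x. x - G x)"
  shows "\<exists>c>0. \<forall>x. norm x \<le> c * norm (x - G x)"
proof (rule ccontr)
  assume "\<not> ?thesis"
  then have "\<forall>n::nat. \<exists>x. norm x > real (Suc n) * norm (x - G x)"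
    by (metis not_le of_nat_0_less_iff zero_less_Suc)
  then obtain x where x: "\<And>n. norm (x n) > real (Suc n) * norm (x n - G (x n))"
    by metis
  have xnz: "x n \<noteq> 0" for n using x[of n] bl by (auto simp: linear_simps)
  define u where "u n = (1 / norm (x n)) *\<^sub>R x n" for n
  have un: "norm (u n) = 1" for n using xnz by (simp add: u_def)
  have Gu: "G (u n) = (1 / norm (x n)) *\<^sub>R G (x n)" for n
    unfolding u_def by (rule linear_simps(5)[OF bl])
  have small: "norm (u n - G (u n)) < 1 / real (Suc n)" for n
  proof -
    have "u n - G (u n) = (1 / norm (x n)) *\<^sub>R (x n - G (x n))"
      unfolding Gu u_def by (simp add: algebra_simps linear_simps(5)[OF bl])
    then have "norm (u n - G (u n)) = norm (x n - G (x n)) / norm (x n)"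
      by simp
    also have "\<dots> < 1 / real (Suc n)"
      using x[of n] xnz by (simp add: divide_simps mult.commute)
    finally show ?thesis .
  qed
  obtain l r where r: "strict_mono r" and lim: "(G \<circ> u \<circ> r) \<longlonglongrightarrow> l"
    using cpt[of u] un by auto
  have z: "(\<lambda>n. u n - G (u n)) \<longlonglongrightarrow> 0"
  proof (rule tendsto_norm_zero_cancel)
    show "(\<lambda>n. norm (u n - G (u n))) \<longlonglongrightarrow> 0"
    proof (rule tendsto_sandwich[where f="\<lambda>_. 0" and h="\<lambda>n. 1 / real (Suc n)"])
      show "\<forall>\<^sub>F n in sequentially. 0 \<le> norm (u n - G (u n))" by simp
      show "\<forall>\<^sub>F n in sequentially. norm (u n - G (u n)) \<le> 1 / real (Suc n)"
        using small less_imp_le by (intro always_eventually) blast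
      show "(\<lambda>n. 1 / real (Suc n)) \<longlonglongrightarrow> 0" using LIMSEQ_inverse_real_of_nat
        by (simp add: inverse_eq_divide)
    qed simp
  qed
  have z': "(\<lambda>n. u (r n) - G (u (r n))) \<longlonglongrightarrow> 0"
    using LIMSEQ_subseq_LIMSEQ[OF z r] by (simp add: o_def)
  have ul: "(\<lambda>n. u (r n)) \<longlonglongrightarrow> l"
  proof -
    have "(\<lambda>n. (u (r n) - G (u (r n))) + G (u (r n))) \<longlonglongrightarrow> 0 + l"
      using z' lim by (intro tendsto_add) (auto simp: o_def)
    then show ?thesis by simp
  qed
  have "norm l = 1"
  proof -
    have "(\<lambda>n. norm (u (r n))) \<longlonglongrightarrow> norm l" using ul by (rule tendsto_norm)
    then show ?thesis using un by (simp add: LIMSEQ_const_iff)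
  qed
  moreover have "(\<lambda>n. G (u (r n))) \<longlonglongrightarrow> G l"
    using ul bounded_linear.tendsto[OF bl] by blast
  then have "G l = l" using lim LIMSEQ_unique by (auto simp: o_def)
  then have "(\<lambda>x. x - G x) l = (\<lambda>x. x - G x) 0" using bl by (simp add: linear_simps)
  then have "l = 0" using injD[OF inj, of l 0] by simp
  ultimately show False by simp
qed

lemma fa_closed_image:
  fixes G :: "'a::banach \<Rightarrow> 'a"
  assumes bl: "bounded_linear G"
   and c: "c > 0" and lb: "\<And>x. norm x \<le> c * norm (x - G x)"
   and W: "closed W"
  shows "closed ((\<lambda>x. x - G x) ` W)"
  unfolding closed_sequential_limits
proof (intro allI impI, elim conjE)
  fix y l assume y: "\<forall>n. y n \<in> (\<lambda>x. x - G x) ` W" and lim: "y \<longlonglongrightarrow> l"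
  have "\<forall>n. \<exists>v. v \<in> W \<and> y n = v - G v" using y by blast
  from choice[OF this] obtain w where w0: "\<forall>n. w n \<in> W \<and> y n = w n - G (w n)" by blast
  have w: "\<And>n. w n \<in> W" "\<And>n. y n = w n - G (w n)" using w0 by simp_all
  have "Cauchy w"
  proof (rule metric_CauchyI)
    fix e :: real assume e: "e > 0"
    have "Cauchy y" using lim by (rule LIMSEQ_imp_Cauchy)
    have ec: "e / c > 0" using e c by simp
    obtain M where M0: "\<forall>m\<ge>M. \<forall>n\<ge>M. dist (y m) (y n) < e / c"
      using metric_CauchyD[OF \<open>Cauchy y\<close> ec] by blast
    have M: "\<And>m n. m \<ge> M \<Longrightarrow> n \<ge> M \<Longrightarrow> dist (y m) (y n) < e / c" using M0 by blast
    show "\<exists>M. \<forall>m\<ge>M. \<forall>n\<ge>M. dist (w m) (w n) < e"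
    proof (intro exI allI impI)
      fix m n assume mn: "m \<ge> M" "n \<ge> M"
      have "dist (w m) (w n) = norm (w m - w n)" by (simp add: dist_norm)
      also have "\<dots> \<le> c * norm ((w m - w n) - G (w m - w n))" by (rule lb)
      also have "(w m - w n) - G (w m - w n) = y m - y n"
        using w bl by (simp add: linear_simps)
      also have "c * norm (y m - y n) < c * (e / c)"
        using M[OF mn] c by (simp add: dist_norm pos_less_divide_eq mult.commute)
      also have "\<dots> = e" using c by simp
      finally show "dist (w m) (w n) < e" .
    qed
  qed
  then have "convergent w" by (simp add: Cauchy_convergent_iff)
  then obtain w0 where w0: "w \<longlonglongrightarrow> w0" unfolding convergent_def by blast
  have w0W: "w0 \<in> W" by (rule closed_sequentially[OF W w(1) w0])
  have tl: "(\<lambda>n. w n - G (w n)) \<longlonglongrightarrow> w0 - G w0"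
    using w0 bounded_linear.tendsto[OF bl w0] by (rule tendsto_diff)
  have "y = (\<lambda>n. w n - G (w n))" by (rule ext) (simp add: w(2))
  with tl have "y \<longlonglongrightarrow> w0 - G w0" by simp
  then have "l = w0 - G w0" using lim by (rule LIMSEQ_unique[rotated])
  then show "l \<in> (\<lambda>x. x - G x) ` W" using w0W by blast
qed

theorem fredholm_alternative:
  fixes G :: "'a::banach \<Rightarrow> 'a"
  assumes bl: "bounded_linear G"
   and cpt: "\<And>x::nat\<Rightarrow>'a. (\<forall>n. norm (x n) \<le> 1) \<Longrightarrow> (\<exists>l r. strict_mono r \<and> ((G \<circ> x \<circ> r) \<longlonglongrightarrow> l))"
   and inj: "inj (\<lambda>x. x - G x)"
  shows "surj (\<lambda>x. x - G x)"
proof (rule ccontr)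
  assume ns: "\<not> surj (\<lambda>x. x - G x)"
  define f where "f = (\<lambda>x. x - G x)"
  have linf: "linear f" unfolding f_def using bl
    by (intro linear_compose_sub linear_id bounded_linear.linear) (auto simp: id_def)
  obtain c where c: "c > 0" "\<And>x. norm x \<le> c * norm (x - G x)"
    using fa_lower_bound[OF bl cpt inj] by blast
  define W where "W k = (f ^^ k) ` UNIV" for k
  have WS: "W (Suc k) = f ` W k" for k unfolding W_def by (simp add: image_comp)
  have W0: "W 0 = UNIV" by (simp add: W_def)
  have Wsub: "subspace (W k)" for k
  proof (induction k)
    case 0 show ?case by (simp add: W0)
  next
    case (Suc k) show ?case unfolding WS by (rule linear_subspace_image[OF linf Suc])
  qed
  have Wcl: "closed (W k)" for k
  proof (induction k)
    case 0 show ?case by (simp add: W0)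
  next
    case (Suc k) show ?case unfolding WS f_def by (rule fa_closed_image[OF bl c Suc])
  qed
  have Wdec: "W (Suc k) \<subseteq> W k" for k
  proof (induction k)
    case 0 show ?case by (simp add: W0)
  next
    case (Suc k) show ?case using image_mono[OF Suc] by (simp only: WS)
  qed
  have Wmono: "W m \<subseteq> W n" if "n \<le> m" for m n
    using that
  proof (induction m)
    case 0 then show ?case by simp
  next
    case (Suc m) then show ?case using Wdec[of m] by (cases "n = Suc m") auto
  qed
  have Wstrict: "W (Suc k) \<noteq> W k" for k
  proof (induction k)
    case 0 then show ?case using ns by (simp add: W_def f_def)
  next
    case (Suc k)
    have "inj f" using inj by (simp add: f_def)
    then show ?case using Suc by (simp add: WS[of "Suc k"] WS[of k] inj_image_eq_iff)
  qed
  have "\<forall>k. \<exists>x\<in>W k. norm x = 1 \<and> (\<forall>w\<in>W (Suc k). 1/2 \<le> norm (x - w))"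
    using riesz_lemma[OF Wsub Wsub Wcl Wdec Wstrict] by blast
  then obtain x where xW: "\<And>k. x k \<in> W k" and xn: "\<And>k. norm (x k) = 1"
    and xd: "\<And>k w. w \<in> W (Suc k) \<Longrightarrow> 1/2 \<le> norm (x k - w)" by metis
  have sep: "1/2 \<le> dist (G (x k)) (G (x m))" if "k < m" for k m
  proof -
    have "f (x k) \<in> W (Suc k)" using xW by (simp add: WS)
    moreover have "x m \<in> W (Suc k)" using xW Wmono that by (meson Suc_leI subsetD)
    moreover have "f (x m) \<in> W (Suc k)" using xW[of m] Wmono[of "Suc k" "Suc m"] that WS[of m] by auto
    ultimately have "f (x k) + x m - f (x m) \<in> W (Suc k)"
      using Wsub[of "Suc k"] by (simp add: subspace_add subspace_diff)
    then have "1/2 \<le> norm (x k - (f (x k) + x m - f (x m)))" by (rule xd)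
    also have "x k - (f (x k) + x m - f (x m)) = G (x k) - G (x m)" by (simp add: f_def)
    finally show ?thesis by (simp add: dist_norm)
  qed
  obtain l r where r: "strict_mono r" and lim: "(G \<circ> x \<circ> r) \<longlonglongrightarrow> l"
    using cpt[of x] xn by auto
  have "Cauchy (G \<circ> x \<circ> r)" using lim by (rule LIMSEQ_imp_Cauchy)
  then obtain M where M0: "\<forall>m\<ge>M. \<forall>n\<ge>M. dist ((G \<circ> x \<circ> r) m) ((G \<circ> x \<circ> r) n) < 1/2"
    using metric_CauchyD[of "G \<circ> x \<circ> r" "1/2"] by auto
  have M: "\<And>m n. m \<ge> M \<Longrightarrow> n \<ge> M \<Longrightarrow> dist ((G \<circ> x \<circ> r) m) ((G \<circ> x \<circ> r) n) < 1/2"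
    using M0 by blast
  have "r M < r (Suc M)" using r by (simp add: strict_mono_def)
  then have "1/2 \<le> dist (G (x (r M))) (G (x (r (Suc M))))" by (rule sep)
  moreover have "dist (G (x (r M))) (G (x (r (Suc M)))) < 1/2" using M[of M "Suc M"] by simp
  ultimately show False by simp
qed

locale fcore =
  fixes D :: "'a::banach set" and T K :: "'a \<Rightarrow> 'a"
  assumes D: "subspace D"
   and Tadd: "\<And>x y. x\<in>D \<Longrightarrow> y\<in>D \<Longrightarrow> T (x+y) = T x + T y"
   and Tsc: "\<And>c x. x\<in>D \<Longrightarrow> T (c *\<^sub>R x) = c *\<^sub>R T x"
   and Tcl: "closed {(x, T x) | x. x \<in> D}"
   and Tce: "\<And>M. compact (closure {x\<in>D. norm x + norm (T x) \<le> M})"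
   and K: "bounded_linear K"
   and Sinj: "inj_on (\<lambda>x. T x - K x) D"
begin

lemma T0: "T 0 = 0"
  using Tsc[of 0 0] subspace_0[OF D] by simp

lemma Tdiff: "x\<in>D \<Longrightarrow> y\<in>D \<Longrightarrow> T (x - y) = T x - T y"
proof -
  assume x: "x\<in>D" and y: "y\<in>D"
  have m: "(-1) *\<^sub>R y \<in> D" by (rule subspace_scale[OF D y])
  have "T (x + (-1) *\<^sub>R y) = T x + T ((-1) *\<^sub>R y)" by (rule Tadd[OF x m])
  also have "T ((-1) *\<^sub>R y) = (-1) *\<^sub>R T y" by (rule Tsc[OF y])
  finally show ?thesis by simp
qed

lemma seq_in_ball:
  fixes u :: "nat \<Rightarrow> 'a"
  assumes u: "\<And>n. u n \<in> D" "\<And>n. norm (u n) + norm (T (u n)) \<le> M"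
  obtains l r where "strict_mono r" "(u \<circ> r) \<longlonglongrightarrow> l"
proof -
  have sc: "seq_compact (closure {x\<in>D. norm x + norm (T x) \<le> M})"
    by (rule compact_imp_seq_compact[OF Tce])
  have "u n \<in> {x\<in>D. norm x + norm (T x) \<le> M}" for n using u by simp
  then have "\<forall>n. u n \<in> closure {x\<in>D. norm x + norm (T x) \<le> M}"
    using closure_subset by blast
  from seq_compactE[OF sc this] show ?thesis using that by metis
qed

lemma graph_limit:
  fixes u :: "nat \<Rightarrow> 'a"
  assumes u: "\<And>n. u n \<in> D" and ul: "u \<longlonglongrightarrow> l" and Tl: "(\<lambda>n. T (u n)) \<longlonglongrightarrow> v"
  shows "l \<in> D \<and> T l = v"
proof -
  have tl: "(\<lambda>n. (u n, T (u n))) \<longlonglongrightarrow> (l, v)" using ul Tl by (rule tendsto_Pair)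
  have mem: "\<And>n. (u n, T (u n)) \<in> {(x, T x) | x. x \<in> D}" using u by blast
  have "(l, v) \<in> {(x, T x) | x. x \<in> D}" by (rule closed_sequentially[OF Tcl mem tl])
  then show ?thesis by auto
qed

lemma core_surj:
  assumes Zc: "closed Z" and Zs: "subspace Z" and F: "bounded_linear F"
    and Tinj: "inj_on (\<lambda>y. T y + F y) (D \<inter> Z)"
    and Tsurj: "(\<lambda>y. T y + F y) ` (D \<inter> Z) = UNIV"
  shows "(\<lambda>x. T x - K x) ` D = UNIV"
proof -
  define Y where "Y = D \<inter> Z"
  define T' where "T' y = T y + F y" for y
  have Ysub: "subspace Y" unfolding Y_def using D Zs by (rule subspace_inter)
  have YD: "y \<in> D" if "y \<in> Y" for y using that by (simp add: Y_def)
  have Y0: "0 \<in> Y" using subspace_0[OF Ysub] .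
  have T'add: "T' (x + y) = T' x + T' y" if "x \<in> Y" "y \<in> Y" for x y
    using Tadd[OF YD[OF that(1)] YD[OF that(2)]] F unfolding T'_def by (simp add: linear_simps)
  have T'sc: "T' (c *\<^sub>R x) = c *\<^sub>R T' x" if "x \<in> Y" for x c
    using Tsc[OF YD[OF that]] F unfolding T'_def by (simp add: linear_simps scaleR_add_right)
  have T'0: "T' 0 = 0" unfolding T'_def using T0 F by (simp add: linear_simps)
  have T'inj: "inj_on T' Y" using Tinj unfolding T'_def Y_def .
  have T'surj: "T' ` Y = UNIV" using Tsurj unfolding T'_def Y_def .
  obtain KF where KF: "KF > 0" "\<And>x. norm (F x) \<le> norm x * KF"
    using bounded_linear.pos_bounded[OF F] by blast
  have TT': "T y = T' y - F y" for y by (simp add: T'_def)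
  have lb: "\<exists>C>0. \<forall>y\<in>Y. norm y \<le> C * norm (T' y)"
  proof (rule ccontr)
    assume neg: "\<not> ?thesis"
    have "\<forall>n::nat. \<exists>y. y \<in> Y \<and> real (Suc n) * norm (T' y) < norm y"
    proof
      fix n :: nat
      have "real (Suc n) > 0" by simp
      then have "\<not> (\<forall>y\<in>Y. norm y \<le> real (Suc n) * norm (T' y))" using neg by blast
      then show "\<exists>y. y \<in> Y \<and> real (Suc n) * norm (T' y) < norm y" by (auto simp: not_le)
    qed
    from choice[OF this] obtain y where y0: "\<forall>n. y n \<in> Y \<and> real (Suc n) * norm (T' (y n)) < norm (y n)"
      by blast
    have yY: "y n \<in> Y" for n using y0 by blast
    have yb: "real (Suc n) * norm (T' (y n)) < norm (y n)" for n using y0 by blast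
    have ynz: "norm (y n) > 0" for n
    proof -
      have "0 \<le> real (Suc n) * norm (T' (y n))" by simp
      then show ?thesis using yb[of n] by linarith
    qed
    define u where "u n = (1 / norm (y n)) *\<^sub>R y n" for n
    have uY: "u n \<in> Y" for n unfolding u_def by (rule subspace_scale[OF Ysub yY])
    have un: "norm (u n) = 1" for n using ynz[of n] by (simp add: u_def)
    have T'u: "T' (u n) = (1 / norm (y n)) *\<^sub>R T' (y n)" for n
      unfolding u_def by (rule T'sc[OF yY])
    have small: "norm (T' (u n)) \<le> 1 / real (Suc n)" for n
    proof -
      have "norm (T' (u n)) = norm (T' (y n)) / norm (y n)" using ynz[of n] by (simp add: T'u)
      also have "\<dots> \<le> 1 / real (Suc n)"
        using yb[of n] ynz[of n] by (simp add: divide_simps mult.commute)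
      finally show ?thesis .
    qed
    have Tub: "norm (T (u n)) \<le> 1 + KF" for n
    proof -
      have "norm (T (u n)) \<le> norm (T' (u n)) + norm (F (u n))"
        unfolding TT' by (rule norm_triangle_ineq4)
      also have "norm (T' (u n)) \<le> 1"
      proof -
        have "1 / real (Suc n) \<le> 1" by simp
        then show ?thesis using small[of n] by linarith
      qed
      also have "norm (F (u n)) \<le> KF" using KF(2)[of "u n"] un[of n] by simp
      finally show ?thesis by simp
    qed
    have bnd: "norm (u n) + norm (T (u n)) \<le> 2 + KF" for n using un[of n] Tub[of n] by simp
    have uD: "u n \<in> D" for n using YD[OF uY] .
    obtain l r where r: "strict_mono r" and ul: "(u \<circ> r) \<longlonglongrightarrow> l"
      by (rule seq_in_ball[of u "2 + KF", OF uD bnd])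
    have ul': "(\<lambda>n. u (r n)) \<longlonglongrightarrow> l" using ul by (simp add: o_def)
    have Fl: "(\<lambda>n. F (u (r n))) \<longlonglongrightarrow> F l" by (rule bounded_linear.tendsto[OF F ul'])
    have T'z: "(\<lambda>n. T' (u n)) \<longlonglongrightarrow> 0"
    proof (rule tendsto_norm_zero_cancel)
      show "(\<lambda>n. norm (T' (u n))) \<longlonglongrightarrow> 0"
      proof (rule tendsto_sandwich[where f="\<lambda>_. 0" and h="\<lambda>n. 1 / real (Suc n)"])
        show "\<forall>\<^sub>F n in sequentially. 0 \<le> norm (T' (u n))" by simp
        show "\<forall>\<^sub>F n in sequentially. norm (T' (u n)) \<le> 1 / real (Suc n)"
          using small by (intro always_eventually) blast
        show "(\<lambda>n. 1 / real (Suc n)) \<longlonglongrightarrow> 0" using LIMSEQ_inverse_real_of_nat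
          by (simp add: inverse_eq_divide)
      qed simp
    qed
    have T'zr: "(\<lambda>n. T' (u (r n))) \<longlonglongrightarrow> 0"
      using LIMSEQ_subseq_LIMSEQ[OF T'z r] by (simp add: o_def)
    have "(\<lambda>n. T' (u (r n)) - F (u (r n))) \<longlonglongrightarrow> 0 - F l" using T'zr Fl by (rule tendsto_diff)
    then have Tl: "(\<lambda>n. T (u (r n))) \<longlonglongrightarrow> - F l" by (simp add: TT')
    have urD: "u (r n) \<in> D" for n by (rule uD)
    have lD: "l \<in> D \<and> T l = - F l"
      by (rule graph_limit[of "\<lambda>n. u (r n)", OF urD ul' Tl])
    have uZ: "u (r n) \<in> Z" for n using uY[of "r n"] by (simp add: Y_def)
    have lZ: "l \<in> Z" by (rule closed_sequentially[OF Zc uZ ul'])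
    have lY: "l \<in> Y" using lD lZ by (simp add: Y_def)
    have "T' l = 0" using lD by (simp add: T'_def)
    then have "T' l = T' 0" using T'0 by simp
    then have "l = 0" by (rule inj_onD[OF T'inj _ lY Y0])
    moreover have "norm l = 1"
    proof -
      have "(\<lambda>n. norm (u (r n))) \<longlonglongrightarrow> norm l" using ul' by (rule tendsto_norm)
      then show ?thesis using un by (simp add: LIMSEQ_const_iff)
    qed
    ultimately show False by simp
  qed
  then obtain C where C: "C > 0" "\<And>y. y \<in> Y \<Longrightarrow> norm y \<le> C * norm (T' y)" by blast
  define Q where "Q = inv_into Y T'"
  have xim: "x \<in> T' ` Y" for x using T'surj by simp
  have QY: "Q x \<in> Y" for x unfolding Q_def by (rule inv_into_into[OF xim])
  have TQ: "T' (Q x) = x" for x unfolding Q_def by (rule f_inv_into_f[OF xim])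
  have QT: "Q (T' y) = y" if "y \<in> Y" for y unfolding Q_def using T'inj that by (rule inv_into_f_f)
  have Qadd: "Q (x + y) = Q x + Q y" for x y
  proof -
    have m: "Q x + Q y \<in> Y" using QY Ysub by (simp add: subspace_add)
    have "T' (Q x + Q y) = x + y" using T'add[OF QY QY] TQ by simp
    then show ?thesis using QT[OF m] by simp
  qed
  have Qsc: "Q (c *\<^sub>R x) = c *\<^sub>R Q x" for c x
  proof -
    have m: "c *\<^sub>R Q x \<in> Y" using QY Ysub by (simp add: subspace_scale)
    have "T' (c *\<^sub>R Q x) = c *\<^sub>R x" using T'sc[OF QY] TQ by simp
    then show ?thesis using QT[OF m] by simp
  qed
  have Qb: "norm (Q x) \<le> norm x * C" for x using C(2)[OF QY[of x]] TQ by (simp add: mult.commute)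
  have Qbl: "bounded_linear Q"
    by (rule bounded_linear_intro[where K=C]) (auto simp: Qadd Qsc Qb)
  define G where "G x = K (Q x) + F (Q x)" for x
  have Gbl: "bounded_linear G" unfolding G_def
    by (intro bounded_linear_add bounded_linear_compose[OF K Qbl] bounded_linear_compose[OF F Qbl])
  have Gcpt: "\<exists>l r. strict_mono r \<and> ((G \<circ> x \<circ> r) \<longlonglongrightarrow> l)" if xb: "\<forall>n. norm (x n) \<le> 1" for x :: "nat \<Rightarrow> 'a"
  proof -
    define v where "v n = Q (x n)" for n
    have vD: "v n \<in> D" for n using YD[OF QY] by (simp add: v_def)
    have vb: "norm (v n) \<le> C" for n
    proof -
      have "norm (x n) * C \<le> 1 * C" using xb C(1) by (intro mult_right_mono) auto
      then show ?thesis using Qb[of "x n"] by (simp add: v_def)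
    qed
    have Tvb: "norm (T (v n)) \<le> 1 + C * KF" for n
    proof -
      have "norm (T (v n)) \<le> norm (T' (v n)) + norm (F (v n))"
        unfolding TT' by (rule norm_triangle_ineq4)
      also have "norm (T' (v n)) \<le> 1" using TQ xb by (simp add: v_def)
      also have "norm (F (v n)) \<le> C * KF"
      proof -
        have "norm (v n) * KF \<le> C * KF" using vb[of n] KF(1) by (intro mult_right_mono) auto
        then show ?thesis using KF(2)[of "v n"] by linarith
      qed
      finally show ?thesis by simp
    qed
    have bnd: "norm (v n) + norm (T (v n)) \<le> C + (1 + C * KF)" for n using vb[of n] Tvb[of n] by simp
    obtain l r where r: "strict_mono r" and vl: "(v \<circ> r) \<longlonglongrightarrow> l"
      by (rule seq_in_ball[of v, OF vD bnd])
    have vl': "(\<lambda>n. v (r n)) \<longlonglongrightarrow> l" using vl by (simp add: o_def)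
    have "(\<lambda>n. K (v (r n)) + F (v (r n))) \<longlonglongrightarrow> K l + F l"
      by (intro tendsto_add bounded_linear.tendsto[OF K vl'] bounded_linear.tendsto[OF F vl'])
    then have "(G \<circ> x \<circ> r) \<longlonglongrightarrow> K l + F l" by (simp add: G_def v_def o_def)
    then show ?thesis using r by blast
  qed
  have Ginj: "inj (\<lambda>x. x - G x)"
  proof (rule injI)
    fix x y assume eq: "x - G x = y - G y"
    define v where "v = x - y"
    have vG: "v - G v = 0" using eq Gbl by (simp add: v_def linear_simps algebra_simps)
    have "T (Q v) - K (Q v) = (T' (Q v) - F (Q v)) - K (Q v)" by (simp add: TT')
    also have "\<dots> = v - G v" by (simp add: TQ G_def algebra_simps)
    finally have "T (Q v) - K (Q v) = T 0 - K 0" using vG T0 K by (simp add: linear_simps)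
    then have "(\<lambda>x. T x - K x) (Q v) = (\<lambda>x. T x - K x) 0" by simp
    then have "Q v = 0" by (rule inj_onD[OF Sinj _ YD[OF QY] subspace_0[OF D]])
    then have "v = 0" using TQ[of v] T'0 by simp
    then show "x = y" by (simp add: v_def)
  qed
  have su: "surj (\<lambda>x. x - G x)" by (rule fredholm_alternative[OF Gbl Gcpt Ginj])
  have "z \<in> (\<lambda>x. T x - K x) ` D" for z
  proof -
    obtain x where x: "z = x - G x" using surjD[OF su, of z] by blast
    have "T (Q x) - K (Q x) = (T' (Q x) - F (Q x)) - K (Q x)" by (simp add: TT')
    also have "\<dots> = x - G x" by (simp add: TQ G_def algebra_simps)
    finally have "T (Q x) - K (Q x) = z" using x by simp
    then show ?thesis using YD[OF QY[of x]] by (rule image_eqI[OF sym])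
  qed
  then show ?thesis by blast
qed
end

lemma delta_functional:
  fixes Nb :: "'a::real_normed_vector set"
  assumes fin: "finite Nb" and lin: "linear p" and b0: "b0 \<in> Nb"
    and del: "\<And>b. b \<in> Nb \<Longrightarrow> p b = (if b = b0 then 1 else 0)"
  shows "p (\<Sum>b\<in>Nb. c b *\<^sub>R b) = c b0"
proof -
  have "p (\<Sum>b\<in>Nb. c b *\<^sub>R b) = (\<Sum>b\<in>Nb. c b * p b)"
    using lin by (simp add: linear_sum linear_scale)
  also have "\<dots> = (\<Sum>b\<in>Nb. (if b = b0 then c b else 0))"
    by (rule sum.cong) (auto simp: del)
  also have "\<dots> = c b0" using fin b0 by simp
  finally show ?thesis .
qed

context fcore
begin

lemma TD_subspace: "subspace (T ` D)"
  unfolding subspace_def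
proof (intro conjI ballI allI)
  show "0 \<in> T ` D" using T0 subspace_0[OF D] by (metis image_eqI)
next
  fix x y assume "x \<in> T ` D" "y \<in> T ` D"
  then obtain a b where ab: "a \<in> D" "b \<in> D" "x = T a" "y = T b" by blast
  then have "x + y = T (a + b)" using Tadd by simp
  moreover have "a + b \<in> D" using ab D by (simp add: subspace_add)
  ultimately show "x + y \<in> T ` D" by blast
next
  fix c x assume "x \<in> T ` D"
  then obtain a where a: "a \<in> D" "x = T a" by blast
  then have "c *\<^sub>R x = T (c *\<^sub>R a)" using Tsc by simp
  moreover have "c *\<^sub>R a \<in> D" using a D by (simp add: subspace_scale)
  ultimately show "c *\<^sub>R x \<in> T ` D" by blast
qed

lemma minimal_complement:
  assumes Cfin: "finite C" and Cspan: "span (T ` D \<union> C) = UNIV"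
  obtains C' where "C' \<subseteq> C" "span (T ` D \<union> C') = UNIV"
    "\<And>a. (\<Sum>e\<in>C'. a e *\<^sub>R e) \<in> T ` D \<Longrightarrow> \<forall>e\<in>C'. a e = 0"
proof -
  define P where "P c \<longleftrightarrow> c \<subseteq> C \<and> span (T ` D \<union> c) = UNIV" for c
  have "\<exists>c. P c \<and> card c = card C" using Cspan by (auto simp: P_def)
  then have ex: "\<exists>n c. P c \<and> card c = n" by blast
  define n0 where "n0 = (LEAST n. \<exists>c. P c \<and> card c = n)"
  obtain C' where C': "P C'" "card C' = n0"
    using LeastI_ex[OF ex] unfolding n0_def by blast
  have minl: "n0 \<le> card c" if "P c" for c
    unfolding n0_def using that by (intro Least_le) blast
  have C'fin: "finite C'" using C'(1) Cfin unfolding P_def by (meson finite_subset)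
  have indep: "\<forall>e\<in>C'. a e = 0" if sa: "(\<Sum>e\<in>C'. a e *\<^sub>R e) \<in> T ` D" for a
  proof (rule ccontr)
    assume "\<not> (\<forall>e\<in>C'. a e = 0)"
    then obtain e0 where e0: "e0 \<in> C'" "a e0 \<noteq> 0" by blast
    define C0 where "C0 = C' - {e0}"
    define Sp where "Sp = span (T ` D \<union> C0)"
    have sum_split: "(\<Sum>e\<in>C'. a e *\<^sub>R e) = a e0 *\<^sub>R e0 + (\<Sum>e\<in>C0. a e *\<^sub>R e)"
      unfolding C0_def using C'fin e0(1) by (simp add: sum.remove)
    have s1: "(\<Sum>e\<in>C'. a e *\<^sub>R e) \<in> Sp" unfolding Sp_def using sa by (meson UnI1 span_base)
    have s2: "(\<Sum>e\<in>C0. a e *\<^sub>R e) \<in> Sp" unfolding Sp_def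
      by (intro span_sum span_scale span_base) auto
    have "a e0 *\<^sub>R e0 \<in> Sp" using span_diff[OF s1[unfolded Sp_def] s2[unfolded Sp_def]] unfolding sum_split Sp_def by simp
    then have "(1 / a e0) *\<^sub>R (a e0 *\<^sub>R e0) \<in> Sp" unfolding Sp_def by (rule span_scale)
    then have e0Sp: "e0 \<in> Sp" using e0(2) by simp
    have "T ` D \<union> C' \<subseteq> Sp"
    proof
      fix x assume "x \<in> T ` D \<union> C'"
      then show "x \<in> Sp"
      proof
        assume "x \<in> T ` D" then show ?thesis unfolding Sp_def by (simp add: span_base)
      next
        assume xC: "x \<in> C'"
        show ?thesis
        proof (cases "x = e0")
          case True then show ?thesis using e0Sp by simp
        next
          case False then have "x \<in> C0" using xC by (simp add: C0_def)
          then show ?thesis unfolding Sp_def by (simp add: span_base)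
        qed
      qed
    qed
    then have "span (T ` D \<union> C') \<subseteq> Sp" unfolding Sp_def by (rule span_minimal) simp
    then have "span (T ` D \<union> C0) = UNIV" using C'(1) unfolding P_def Sp_def by blast
    then have "P C0" using C'(1) unfolding P_def C0_def by blast
    then have "n0 \<le> card C0" by (rule minl)
    moreover have "card C0 < card C'" unfolding C0_def using C'fin e0(1) by (meson card_Diff1_less)
    ultimately show False using C'(2) by simp
  qed
  have c1: "C' \<subseteq> C" and c2: "span (T ` D \<union> C') = UNIV" using C'(1) unfolding P_def by blast+
  show ?thesis by (rule that[OF c1 c2 indep])
qed

lemma index_pos_surj:
  assumes Nbf: "finite Nb" and Nbi: "independent Nb" and NbN: "span Nb = {x\<in>D. T x = 0}"
    and Cfin: "finite C" and Cspan: "span (T ` D \<union> C) = UNIV" and card: "card C \<le> card Nb"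
  shows "(\<lambda>x. T x - K x) ` D = UNIV"
proof -
  obtain C' where C'C: "C' \<subseteq> C" and C'span: "span (T ` D \<union> C') = UNIV"
    and C'ind: "\<And>a. (\<Sum>e\<in>C'. a e *\<^sub>R e) \<in> T ` D \<Longrightarrow> \<forall>e\<in>C'. a e = 0"
    by (rule minimal_complement[OF Cfin Cspan], rule that, assumption+)
  have C'fin: "finite C'" using finite_subset[OF C'C Cfin] .
  have "card C' \<le> card Nb" using card_mono[OF Cfin C'C] card by linarith
  then obtain h where h: "h ` C' \<subseteq> Nb" "inj_on h C'" using card_le_inj[OF C'fin Nbf] by blast
  have spanN: "x \<in> D \<and> T x = 0" if "x \<in> span Nb" for x using that NbN by blast
  have sep: "\<forall>b\<in>Nb. \<exists>f::'a\<Rightarrow>real. bounded_linear f \<and> f b = 1 \<and> (\<forall>m\<in>span (Nb - {b}). f m = 0)"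
  proof
    fix b assume b: "b \<in> Nb"
    have nb: "b \<notin> span (Nb - {b})" using Nbi b by (simp add: dependent_def)
    have fin: "finite (Nb - {b})" using Nbf by simp
    show "\<exists>f::'a\<Rightarrow>real. bounded_linear f \<and> f b = 1 \<and> (\<forall>m\<in>span (Nb - {b}). f m = 0)"
      by (rule separating_functional[OF subspace_span closed_span_finite[OF fin] nb])
  qed
  from bchoice[OF sep] obtain \<phi> :: "'a \<Rightarrow> 'a \<Rightarrow> real" where \<phi>: "\<forall>b\<in>Nb. bounded_linear (\<phi> b) \<and> \<phi> b b = 1 \<and> (\<forall>m\<in>span (Nb - {b}). \<phi> b m = 0)"
    by blast
  have \<phi>bl: "bounded_linear (\<phi> b)" if "b \<in> Nb" for b using \<phi> that by blast
  have \<phi>lin: "linear (\<phi> b)" if "b \<in> Nb" for b using bounded_linear.linear[OF \<phi>bl[OF that]] .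
  have \<phi>del: "\<phi> b b' = (if b' = b then 1 else 0)" if b: "b \<in> Nb" and b': "b' \<in> Nb" for b b'
  proof (cases "b' = b")
    case True then show ?thesis using \<phi> b by simp
  next
    case False
    then have "b' \<in> span (Nb - {b})" using b' by (intro span_base) simp
    then show ?thesis using \<phi> b False by simp
  qed
  have coord: "\<phi> b0 (\<Sum>b\<in>Nb. c b *\<^sub>R b) = c b0" if b0: "b0 \<in> Nb" for b0 c
    by (rule delta_functional[OF Nbf \<phi>lin[OF b0] b0 \<phi>del[OF b0]])
  define F where "F y = (\<Sum>e\<in>C'. \<phi> (h e) y *\<^sub>R e)" for y
  have hNb: "h e \<in> Nb" if "e \<in> C'" for e using h(1) that by blast
  have Fbl: "bounded_linear F"
    unfolding F_def[abs_def]
  proof (rule bounded_linear_sum)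
    fix e assume "e \<in> C'"
    then show "bounded_linear (\<lambda>y. \<phi> (h e) y *\<^sub>R e)"
      by (rule bounded_linear_compose[OF bounded_linear_scaleR_left \<phi>bl[OF hNb]])
  qed
  define Z where "Z = {y. \<forall>b\<in>Nb - h ` C'. \<phi> b y = 0}"
  have Zeq: "Z = (\<Inter>b\<in>Nb - h ` C'. {y. \<phi> b y = 0})" unfolding Z_def by blast
  have Zcl: "closed Z"
    unfolding Zeq
  proof (rule closed_INT, intro ballI)
    fix b assume "b \<in> Nb - h ` C'"
    then have "continuous_on UNIV (\<phi> b)" by (intro linear_continuous_on \<phi>bl) simp
    then show "closed {y. \<phi> b y = 0}" by (rule closed_Collect_eq[OF _ continuous_on_const])
  qed
  have Zsub: "subspace Z"
    unfolding subspace_def Z_def using \<phi>lin by (auto simp: linear_add linear_scale linear_0)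
  have key0: "w = 0" if wD: "w \<in> D" and wZ: "w \<in> Z" and w0: "T w + F w = 0" for w
  proof -
    have mD: "(-1) *\<^sub>R w \<in> D" by (rule subspace_scale[OF D wD])
    have Fw: "F w = - T w"
    proof -
      have "F w = (T w + F w) - T w" by simp
      also have "\<dots> = - T w" using w0 by simp
      finally show ?thesis .
    qed
    have "T ((-1) *\<^sub>R w) = - T w" using Tsc[OF wD, of "-1"] by simp
    then have "F w = T ((-1) *\<^sub>R w)" using Fw by simp
    then have "(\<Sum>e\<in>C'. \<phi> (h e) w *\<^sub>R e) \<in> T ` D" using mD unfolding F_def by blast
    then have az: "\<forall>e\<in>C'. \<phi> (h e) w = 0" by (rule C'ind)
    then have "F w = 0" unfolding F_def by simp
    then have "T w = 0" using w0 by simp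
    then have "w \<in> span Nb" using NbN wD by blast
    then obtain c where wc: "w = (\<Sum>b\<in>Nb. c b *\<^sub>R b)" using span_finite[OF Nbf] by blast
    have "c b = 0" if b: "b \<in> Nb" for b
    proof -
      have "\<phi> b w = 0"
      proof (cases "b \<in> h ` C'")
        case True then obtain e where "e \<in> C'" "b = h e" by blast
        then show ?thesis using az by simp
      next
        case False then show ?thesis using wZ b unfolding Z_def by blast
      qed
      then show ?thesis using coord[OF b, of c] wc by simp
    qed
    then show ?thesis using wc by simp
  qed
  have inj: "inj_on (\<lambda>y. T y + F y) (D \<inter> Z)"
  proof (rule inj_onI)
    fix y y' assume y: "y \<in> D \<inter> Z" and y': "y' \<in> D \<inter> Z" and eq: "T y + F y = T y' + F y'"
    have wD: "y - y' \<in> D" using y y' D by (simp add: subspace_diff)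
    have wZ: "y - y' \<in> Z" using y y' Zsub by (simp add: subspace_diff)
    have "T (y - y') + F (y - y') = (T y + F y) - (T y' + F y')"
      using Tdiff y y' Fbl by (simp add: linear_simps)
    then have "T (y - y') + F (y - y') = 0" using eq by simp
    then have "y - y' = 0" by (rule key0[OF wD wZ])
    then show "y = y'" by simp
  qed
  have surj: "(\<lambda>y. T y + F y) ` (D \<inter> Z) = UNIV"
  proof -
    have "x \<in> (\<lambda>y. T y + F y) ` (D \<inter> Z)" for x
    proof -
      have "x \<in> span (T ` D \<union> C')" using C'span by simp
      then obtain r s where rs: "x = r + s" "r \<in> span (T ` D)" "s \<in> span C'"
        unfolding span_Un by blast
      have "span (T ` D) = T ` D" using TD_subspace by (simp add: span_eq_iff)
      then obtain z where z: "z \<in> D" "r = T z" using rs(2) by blast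
      obtain a where a: "s = (\<Sum>e\<in>C'. a e *\<^sub>R e)" using rs(3) span_finite[OF C'fin] by blast
      define g where "g = the_inv_into C' h"
      have gh: "g (h e) = e" if "e \<in> C'" for e unfolding g_def using h(2) that by (rule the_inv_into_f_f)
      define c where "c b = (if b \<in> h ` C' then a (g b) else 0)" for b
      have ch: "c (h e) = a e" if "e \<in> C'" for e using that gh by (simp add: c_def)
      define n1 where "n1 = (\<Sum>b\<in>Nb. \<phi> b z *\<^sub>R b)"
      define n2 where "n2 = (\<Sum>b\<in>Nb. c b *\<^sub>R b)"
      have n1N: "n1 \<in> span Nb" unfolding n1_def by (intro span_sum span_scale span_base)
      have n2N: "n2 \<in> span Nb" unfolding n2_def by (intro span_sum span_scale span_base)
      define y where "y = z - n1 + n2"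
      have yD: "y \<in> D" unfolding y_def using z(1) spanN[OF n1N] spanN[OF n2N] D
        by (simp add: subspace_add subspace_diff)
      have Ty: "T y = T z"
      proof -
        have d1: "z - n1 \<in> D" using z(1) spanN[OF n1N] D by (simp add: subspace_diff)
        have "T y = T (z - n1) + T n2" unfolding y_def by (rule Tadd[OF d1 conjunct1[OF spanN[OF n2N]]])
        also have "T (z - n1) = T z - T n1" by (rule Tdiff[OF z(1) conjunct1[OF spanN[OF n1N]]])
        finally show ?thesis using spanN[OF n1N] spanN[OF n2N] by simp
      qed
      have \<phi>y: "\<phi> b0 y = c b0" if b0: "b0 \<in> Nb" for b0
      proof -
        have "\<phi> b0 y = \<phi> b0 z - \<phi> b0 n1 + \<phi> b0 n2"
          unfolding y_def using \<phi>lin[OF b0] by (simp add: linear_add linear_diff)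
        also have "\<phi> b0 n1 = \<phi> b0 z" unfolding n1_def by (rule coord[OF b0])
        also have "\<phi> b0 n2 = c b0" unfolding n2_def by (rule coord[OF b0])
        finally show ?thesis by simp
      qed
      have yZ: "y \<in> Z" unfolding Z_def using \<phi>y by (auto simp: c_def)
      have Fy: "F y = s"
      proof -
        have "F y = (\<Sum>e\<in>C'. \<phi> (h e) y *\<^sub>R e)" by (simp add: F_def)
        also have "\<dots> = (\<Sum>e\<in>C'. a e *\<^sub>R e)"
          by (rule sum.cong) (simp_all add: \<phi>y[OF hNb] ch)
        finally show ?thesis using a by simp
      qed
      have "T y + F y = x" using Ty Fy z(2) rs(1) by simp
      then show ?thesis using yD yZ by blast
    qed
    then show ?thesis by blast
  qed
  show ?thesis by (rule core_surj[OF Zcl Zsub Fbl inj surj])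
qed

end

lemma J_not_in_span:
  fixes J :: "'a::real_vector \<Rightarrow> 'a"
  assumes Jl: "linear J" and JJ: "\<And>x. J (J x) = - x"
    and U: "subspace U" and JU: "\<And>x. x \<in> U \<Longrightarrow> J x \<in> U" and v: "v \<notin> U"
  shows "J v \<notin> span (insert v U)"
proof
  assume "J v \<in> span (insert v U)"
  then obtain t where t: "J v - t *\<^sub>R v \<in> span U" by (auto simp: span_breakdown_eq)
  moreover have "span U = U" using U by (simp add: span_eq_iff)
  ultimately have u1: "J v - t *\<^sub>R v \<in> U" by simp
  have "J (J v - t *\<^sub>R v) \<in> U" by (rule JU[OF u1])
  then have u2: "- v - t *\<^sub>R J v \<in> U" using Jl JJ by (simp add: linear_diff linear_scale)
  have "(- v - t *\<^sub>R J v) + t *\<^sub>R (J v - t *\<^sub>R v) \<in> U"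
    using u1 u2 U by (simp add: subspace_add subspace_scale)
  then have w: "(- 1 - t * t) *\<^sub>R v \<in> U" by (simp add: algebra_simps)
  have nz: "- 1 - t * t \<noteq> 0" by (smt (verit) zero_le_square)
  have "(1 / (- 1 - t * t)) *\<^sub>R ((- 1 - t * t) *\<^sub>R v) \<in> U" by (rule subspace_scale[OF U w])
  then have "v \<in> U" using nz by simp
  then show False using v by simp
qed

lemma cbasis_aux:
  fixes J :: "'a::real_vector \<Rightarrow> 'a"
  assumes Jl: "linear J" and JJ: "\<And>x. J (J x) = - x" and V: "subspace V"
    and JV: "\<And>x. x \<in> V \<Longrightarrow> J x \<in> V" and Sf: "finite S" and VS: "V = span S"
  shows "n = card S - card (B \<union> J ` B) \<Longrightarrow> finite B \<Longrightarrow> B \<subseteq> V \<Longrightarrow> independent (B \<union> J ` B)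
    \<Longrightarrow> card (B \<union> J ` B) = 2 * card B
    \<Longrightarrow> \<exists>B'. finite B' \<and> span (B' \<union> J ` B') = V \<and> 2 * card B' \<le> card S"
proof (induction n arbitrary: B rule: less_induct)
  case (less n B)
  define U where "U = span (B \<union> J ` B)"
  have JBV: "B \<union> J ` B \<subseteq> V" using less.prems(3) JV by blast
  have UV: "U \<subseteq> V" unfolding U_def by (rule span_minimal[OF JBV V])
  have bound: "card T \<le> card S" if "independent T" "T \<subseteq> V" for T
    using independent_span_bound[OF Sf that(1)] that(2) VS by blast
  show ?case
  proof (cases "U = V")
    case True
    have "card (B \<union> J ` B) \<le> card S" by (rule bound[OF less.prems(4) JBV])
    then show ?thesis using True less.prems U_def by auto
  next
    case False
    then obtain v where v: "v \<in> V" "v \<notin> U" using UV by blast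
    have Us: "subspace U" unfolding U_def by simp
    have JU: "J x \<in> U" if "x \<in> U" for x
    proof -
      have sub: "J ` (B \<union> J ` B) \<subseteq> U"
      proof
        fix y assume "y \<in> J ` (B \<union> J ` B)"
        then obtain b where b: "b \<in> B" "y = J b \<or> y = J (J b)" by blast
        show "y \<in> U"
        proof (cases "y = J b")
          case True then show ?thesis using b(1) unfolding U_def by (simp add: span_base)
        next
          case False
          then have "y = - b" using b JJ by simp
          moreover have "b \<in> U" using b(1) unfolding U_def by (simp add: span_base)
          ultimately show ?thesis using Us by (simp add: subspace_neg)
        qed
      qed
      have "J ` U = span (J ` (B \<union> J ` B))" unfolding U_def by (rule span_linear_image[OF Jl, symmetric])
      also have "\<dots> \<subseteq> U" by (rule span_minimal[OF sub Us])
      finally show ?thesis using that by blast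
    qed
    have Jv: "J v \<notin> span (insert v U)" by (rule J_not_in_span[OF Jl JJ Us JU v(2)])
    define B2 where "B2 = insert v B"
    have eq: "B2 \<union> J ` B2 = insert (J v) (insert v (B \<union> J ` B))" unfolding B2_def by auto
    have vs: "v \<notin> span (B \<union> J ` B)" using v(2) unfolding U_def .
    have Jvs: "J v \<notin> span (insert v (B \<union> J ` B))"
    proof
      assume "J v \<in> span (insert v (B \<union> J ` B))"
      moreover have "B \<union> J ` B \<subseteq> U" unfolding U_def by (rule span_superset)
      then have "span (insert v (B \<union> J ` B)) \<subseteq> span (insert v U)"
        by (intro span_mono insert_mono)
      ultimately show False using Jv by blast
    qed
    have vnot: "v \<notin> B \<union> J ` B"
    proof
      assume "v \<in> B \<union> J ` B" then have "v \<in> span (B \<union> J ` B)" by (rule span_base)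
      with vs show False by simp
    qed
    have Jvnot: "J v \<notin> insert v (B \<union> J ` B)"
    proof
      assume "J v \<in> insert v (B \<union> J ` B)" then have "J v \<in> span (insert v (B \<union> J ` B))" by (rule span_base)
      with Jvs show False by simp
    qed
    have fin1: "finite (B \<union> J ` B)" using less.prems(2) by simp
    have ind1: "independent (insert v (B \<union> J ` B))"
      using less.prems(4) vs vnot by (simp add: independent_insert)
    have ind2: "independent (B2 \<union> J ` B2)"
      unfolding eq using ind1 Jvs Jvnot by (simp add: independent_insert)
    have c2: "card (B2 \<union> J ` B2) = card (B \<union> J ` B) + 2"
      unfolding eq using fin1 vnot Jvnot by simp
    have vB: "v \<notin> B" using vnot by blast
    have card2: "card B2 = card B + 1" unfolding B2_def using less.prems(2) vB by simp
    have B2V: "B2 \<subseteq> V" unfolding B2_def using v(1) less.prems(3) by blast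
    have JB2V: "B2 \<union> J ` B2 \<subseteq> V" using B2V JV by blast
    have "card (B2 \<union> J ` B2) \<le> card S" by (rule bound[OF ind2 JB2V])
    then have lt: "card S - card (B2 \<union> J ` B2) < n" using less.prems(1) c2 by linarith
    have fB2: "finite B2" unfolding B2_def using less.prems(2) by simp
    have ceq: "card (B2 \<union> J ` B2) = 2 * card B2" using c2 card2 less.prems(5) by simp
    show ?thesis by (rule less.IH[OF lt refl fB2 B2V ind2 ceq])
  qed
qed

lemma cbasis:
  fixes J :: "'a::real_vector \<Rightarrow> 'a"
  assumes Jl: "linear J" and JJ: "\<And>x. J (J x) = - x" and V: "subspace V"
    and JV: "\<And>x. x \<in> V \<Longrightarrow> J x \<in> V" and Sf: "finite S" and VS: "V = span S"
  shows "\<exists>B'. finite B' \<and> span (B' \<union> J ` B') = V \<and> 2 * card B' \<le> card S"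
  by (rule cbasis_aux[OF Jl JJ V JV Sf VS refl, of "{}"]) (auto simp: independent_empty)

theorem mainTheorem15:
  fixes J :: "'a::banach \<Rightarrow> 'a" and DA :: "'a set" and A B :: "'a \<Rightarrow> 'a"
  assumes "cstruct J"
    and "clinear_on J DA A" and "closed_op DA A" and "densely_defined DA"
    and "bounded_linear B" and "\<forall>x. B (J x) = J (B x)" and "inj B"
    and "\<not> DA \<subseteq> range B"
    and "fredholm J {x. B x \<in> DA} (\<lambda>x. A (B x))"
    and "compactly_embedded {x. B x \<in> DA} (\<lambda>x. A (B x))"
    and "resolvent_set J DA A \<noteq> {}"
  shows "op_index J {x. B x \<in> DA} (\<lambda>x. A (B x)) < 0"
proof -
  note cs = assms(1) and cl = assms(2) and Bbl = assms(5) and BJ = assms(6) and Binj = assms(7)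
    and nDA = assms(8) and fr = assms(9) and ce = assms(10) and res = assms(11)
  define D where "D = {x. B x \<in> DA}"
  define T where "T x = A (B x)" for x
  have Jbl: "bounded_linear J" and JJ: "\<And>x. J (J x) = - x" using cs unfolding cstruct_def by auto
  have Jlin: "linear J" using Jbl by (rule bounded_linear.linear)
  have DAs: "subspace DA" and DAJ: "\<And>x. x \<in> DA \<Longrightarrow> J x \<in> DA"
    and Aadd: "\<And>x y. x \<in> DA \<Longrightarrow> y \<in> DA \<Longrightarrow> A (x + y) = A x + A y"
    and Asc: "\<And>c x. x \<in> DA \<Longrightarrow> A (c *\<^sub>R x) = c *\<^sub>R A x"
    and AJ: "\<And>x. x \<in> DA \<Longrightarrow> A (J x) = J (A x)"
    using cl unfolding clinear_on_def csubspace_def by auto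
  have Tcl: "closed {(x, T x) | x. x \<in> D}" and
    Nfin: "cfinite_dim J (null_space D T)" and fcod: "finite_codim J (range_op D T)"
    using fr unfolding fredholm_def closed_op_def D_def T_def by auto
  have Tce: "\<And>M. compact (closure {x\<in>D. norm x + norm (T x) \<le> M})"
    using ce unfolding compactly_embedded_def D_def T_def by auto
  obtain z R where Rbl: "bounded_linear R" and R1: "\<And>y. R y \<in> DA \<and> A (R y) - cscale J z (R y) = y"
    and R2: "\<And>x. x \<in> DA \<Longrightarrow> R (A x - cscale J z x) = x"
    using res unfolding resolvent_set_def by blast
  define K where "K x = cscale J z (B x)" for x
  have Kbl: "bounded_linear K"
  proof -
    have "bounded_linear (\<lambda>x. Re z *\<^sub>R B x + Im z *\<^sub>R J (B x))"
      by (intro bounded_linear_add bounded_linear_compose[OF bounded_linear_scaleR_right Bbl]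
          bounded_linear_compose[OF bounded_linear_scaleR_right bounded_linear_compose[OF Jbl Bbl]])
    then show ?thesis unfolding K_def cscale_def .
  qed
  have Blin: "linear B" using Bbl by (rule bounded_linear.linear)
  have Dsub: "subspace D"
    unfolding subspace_def D_def using DAs Blin
    by (auto simp: linear_add linear_scale linear_0 subspace_add subspace_scale subspace_0)
  have Tadd: "\<And>x y. x\<in>D \<Longrightarrow> y\<in>D \<Longrightarrow> T (x+y) = T x + T y"
    unfolding T_def D_def using Aadd Blin by (simp add: linear_add)
  have Tsc: "\<And>c x. x\<in>D \<Longrightarrow> T (c *\<^sub>R x) = c *\<^sub>R T x"
    unfolding T_def D_def using Asc Blin by (simp add: linear_scale)
  have STK: "T x - K x = A (B x) - cscale J z (B x)" for x by (simp add: T_def K_def)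
  have Sinj: "inj_on (\<lambda>x. T x - K x) D"
  proof (rule inj_onI)
    fix x y assume x: "x \<in> D" and y: "y \<in> D" and eq: "T x - K x = T y - K y"
    have "B x = R (T x - K x)" using R2[of "B x"] x by (simp add: STK D_def)
    also have "\<dots> = R (T y - K y)" using eq by simp
    also have "\<dots> = B y" using R2[of "B y"] y by (simp add: STK D_def)
    finally show "x = y" using Binj by (simp add: inj_eq)
  qed
  interpret fc: fcore D T K
    by (rule fcore.intro[OF Dsub Tadd Tsc Tcl Tce Kbl Sinj])
  obtain d where d: "d \<in> DA" "d \<notin> range B" using nDA by blast
  have nsurj: "(\<lambda>x. T x - K x) ` D \<noteq> UNIV"
  proof
    assume su: "(\<lambda>x. T x - K x) ` D = UNIV"
    have "A d - cscale J z d \<in> (\<lambda>x. T x - K x) ` D" using su by simp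
    then obtain x where x: "x \<in> D" "A d - cscale J z d = T x - K x" by blast
    have "B x = R (T x - K x)" using R2[of "B x"] x(1) by (simp add: STK D_def)
    also have "\<dots> = d" using x(2) R2[OF d(1)] by simp
    finally have "B x = d" .
    moreover have "B x \<in> range B" by (rule rangeI)
    ultimately show False using d(2) by simp
  qed
  define N where "N = null_space D T"
  have N_eq: "N = {x\<in>D. T x = 0}" by (simp add: N_def null_space_def)
  obtain Bn where Bn: "finite Bn" "span (Bn \<union> J ` Bn) = N"
    using Nfin unfolding cfinite_dim_def cspan_def N_def by blast
  define S0 where "S0 = Bn \<union> J ` Bn"
  have S0f: "finite S0" using Bn(1) by (simp add: S0_def)
  obtain Nb where Nb: "Nb \<subseteq> S0" "independent Nb" "S0 \<subseteq> span Nb"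
    by (rule maximal_independent_subset[of S0])
  have Nbf: "finite Nb" using finite_subset[OF Nb(1) S0f] .
  have spanNb: "span Nb = N"
  proof
    show "span Nb \<subseteq> N" using span_mono[OF Nb(1)] Bn(2) by (simp add: S0_def)
    have "span S0 \<subseteq> span Nb" using span_mono[OF Nb(3)] unfolding span_span .
    then show "N \<subseteq> span Nb" using Bn(2) by (simp add: S0_def)
  qed
  have JN: "J x \<in> N" if "x \<in> N" for x
  proof -
    have xD: "B x \<in> DA" "A (B x) = 0" using that by (simp_all add: N_eq D_def T_def)
    have "B (J x) \<in> DA" using BJ DAJ[OF xD(1)] by simp
    moreover have "A (B (J x)) = 0" using BJ AJ[OF xD(1)] xD(2) Jbl by (simp add: linear_simps)
    ultimately show ?thesis by (simp add: N_eq D_def T_def)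
  qed
  have Nsub: "subspace N" unfolding spanNb[symmetric] by simp
  define RT where "RT = range_op D T"
  have RT_eq: "RT = T ` D" by (simp add: RT_def range_op_def)
  have JRT: "J y \<in> RT" if yR: "y \<in> RT" for y
  proof -
    obtain x where x: "x \<in> D" "y = T x" using yR RT_eq by blast
    have JxD: "J x \<in> D" using x(1) BJ DAJ by (simp add: D_def)
    have TJ: "T (J x) = J y" using x BJ AJ by (simp add: D_def T_def)
    have "T (J x) \<in> T ` D" by (rule imageI[OF JxD])
    then show ?thesis using TJ RT_eq by simp
  qed
  have exc: "\<exists>n Bc. finite Bc \<and> card Bc = n \<and> cspan J (RT \<union> Bc) = UNIV"
    using fcod unfolding finite_codim_def RT_def by blast
  obtain Bc where Bc: "finite Bc" "card Bc = codim J RT" "cspan J (RT \<union> Bc) = UNIV"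
    using LeastI_ex[OF exc] unfolding codim_def by blast
  define C where "C = Bc \<union> J ` Bc"
  have Cf: "finite C" using Bc(1) by (simp add: C_def)
  have Ccard: "card C \<le> 2 * card Bc"
  proof -
    have "card C \<le> card Bc + card (J ` Bc)" unfolding C_def by (rule card_Un_le)
    also have "card (J ` Bc) \<le> card Bc" by (rule card_image_le[OF Bc(1)])
    finally show ?thesis by simp
  qed
  have Cspan: "span (T ` D \<union> C) = UNIV"
  proof -
    have "(RT \<union> Bc) \<union> J ` (RT \<union> Bc) \<subseteq> T ` D \<union> C"
      using JRT unfolding RT_eq[symmetric] C_def by auto
    then have "span ((RT \<union> Bc) \<union> J ` (RT \<union> Bc)) \<subseteq> span (T ` D \<union> C)" by (rule span_mono)
    then show ?thesis using Bc(3) unfolding cspan_def by auto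
  qed
  have "\<not> card C \<le> card Nb"
  proof
    assume "card C \<le> card Nb"
    then have "(\<lambda>x. T x - K x) ` D = UNIV"
      by (intro fc.index_pos_surj[OF Nbf Nb(2) _ Cf Cspan]) (simp add: spanNb N_eq)
    then show False using nsurj by simp
  qed
  then have lt1: "card Nb < card C" by simp
  obtain B' where B': "finite B'" "span (B' \<union> J ` B') = N" "2 * card B' \<le> card Nb"
    using cbasis[OF Jlin JJ Nsub JN Nbf spanNb[symmetric]] by blast
  have "cdim J N \<le> card B'"
    unfolding cdim_def using B'(1,2) by (intro Least_le) (auto simp: cspan_def)
  then have "2 * cdim J N < 2 * codim J RT" using B'(3) lt1 Ccard Bc(2) by linarith
  then have "cdim J N < codim J RT" by simp
  then show ?thesis unfolding op_index_def N_def RT_def D_def T_def by simp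
qed

end
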